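(* Let $\mathcal{P}=\{X_i\mid i\in I\}$ be a partition of a set $X$, and let $f\in\Sigma(X,\mathcal{P})$. If $f$ is an idempotent, then $\chi^{(f)}$ is the identity map on $I$.
   Context: Maps are written on the right and composed left to right. $T(X,\mathcal{P})=\{f\colon X\to X\mid \forall i\ \exists j:\ X_if\subseteq X_j\}$ (distinct indices for distinct blocks) and $\Sigma(X,\mathcal{P})=\{f\in T(X,\mathcal{P})\mid Xf\cap X_i\neq\emptyset\ \forall i\in I\}$. For $f\in T(X,\mathcal{P})$, $\chi^{(f)}\colon I\to I$ is defined by $i\chi^{(f)}=j$ whenever $X_if\subseteq X_j$. *)

theory Defs
  imports Main
begin

definition is_partition :: "'a set \<Rightarrow> 'i set \<Rightarrow> ('i \<Rightarrow> 'a set) \<Rightarrow> bool" where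
  "is_partition X I P \<longleftrightarrow>
     (\<forall>i\<in>I. P i \<noteq> {}) \<and>
     (\<forall>i\<in>I. \<forall>j\<in>I. i \<noteq> j \<longrightarrow> P i \<inter> P j = {}) \<and>
     (\<Union>i\<in>I. P i) = X"

text \<open>T(X,P): self-maps of X (only values on X matter) sending each block into a block.\<close>
definition T_part :: "'a set \<Rightarrow> 'i set \<Rightarrow> ('i \<Rightarrow> 'a set) \<Rightarrow> ('a \<Rightarrow> 'a) set" where
  "T_part X I P = {f. f ` X \<subseteq> X \<and> (\<forall>i\<in>I. \<exists>j\<in>I. f ` P i \<subseteq> P j)}"

definition Sigma_part :: "'a set \<Rightarrow> 'i set \<Rightarrow> ('i \<Rightarrow> 'a set) \<Rightarrow> ('a \<Rightarrow> 'a) set" where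
  "Sigma_part X I P = {f \<in> T_part X I P. \<forall>i\<in>I. f ` X \<inter> P i \<noteq> {}}"

definition chi :: "'i set \<Rightarrow> ('i \<Rightarrow> 'a set) \<Rightarrow> ('a \<Rightarrow> 'a) \<Rightarrow> 'i \<Rightarrow> 'i" where
  "chi I P f i = (THE j. j \<in> I \<and> f ` P i \<subseteq> P j)"

definition idempotent_on :: "'a set \<Rightarrow> ('a \<Rightarrow> 'a) \<Rightarrow> bool" where
  "idempotent_on X f \<longleftrightarrow> (\<forall>x\<in>X. f (f x) = f x)"

end

theory Submission
  imports Defs
begin

theorem corollary5p7:
  fixes X :: "'a set" and I :: "'i set" and P :: "'i \<Rightarrow> 'a set" and f :: "'a \<Rightarrow> 'a"
  assumes "is_partition X I P"
    and "f \<in> Sigma_part X I P"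
    and "idempotent_on X f"
  shows "\<forall>i\<in>I. chi I P f i = i"
proof
  fix i assume i: "i \<in> I"
  have ne: "\<forall>i\<in>I. P i \<noteq> {}" and dj: "\<forall>i\<in>I. \<forall>j\<in>I. i \<noteq> j \<longrightarrow> P i \<inter> P j = {}"
    and cov: "(\<Union>i\<in>I. P i) = X"
    using assms(1) unfolding is_partition_def by auto
  have fX: "f ` X \<subseteq> X" and blk: "\<forall>i\<in>I. \<exists>j\<in>I. f ` P i \<subseteq> P j"
    and meet: "\<forall>i\<in>I. f ` X \<inter> P i \<noteq> {}"
    using assms(2) unfolding Sigma_part_def T_part_def by auto
  obtain x where x: "x \<in> X" "f x \<in> P i" using meet i by blast
  have "f (f x) = f x" using assms(3) x(1) unfolding idempotent_on_def by blast
  hence ffx: "f (f x) \<in> P i" using x by simp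
  have self: "f ` P i \<subseteq> P i"
  proof -
    obtain j where j: "j \<in> I" "f ` P i \<subseteq> P j" using blk i by blast
    have "f (f x) \<in> P j" using j x by blast
    hence "j = i" using dj ffx i j(1) by blast
    thus ?thesis using j by simp
  qed
  have "(THE j. j \<in> I \<and> f ` P i \<subseteq> P j) = i"
  proof (rule the_equality)
    show "i \<in> I \<and> f ` P i \<subseteq> P i" using i self by simp
  next
    fix j assume j: "j \<in> I \<and> f ` P i \<subseteq> P j"
    obtain y where "y \<in> P i" using ne i by blast
    hence "f y \<in> P i" "f y \<in> P j" using self j by blast+
    thus "j = i" using dj i j by blast
  qed
  thus "chi I P f i = i" unfolding chi_def .
qed

end
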